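(* Let $\bowtie\in\{\preceq,\succeq\}$, $\mathcal{T}\in\{\mathrm{dwp},\mathrm{awp}\}$, $C\in\mathsf{pGCL}$ and $f\in\mathbb{E}$. Then $\mathrm{trans}^{\bowtie}_{\mathcal{T}}[\![C]\!](f)\multimap C$.
   Context: States: fix a countably infinite set of program variables with values in $\mathbb{Q}_{\ge 0}$; a state is a map $\sigma$ from variables to $\mathbb{Q}_{\ge0}$ which is $0$ for all but finitely many variables; $\mathsf{States}$ is the set of states. A predicate is a map $\varphi:\mathsf{States}\to\{\mathsf{true},\mathsf{false}\}$; $\varphi\models\psi$ means every state satisfying $\varphi$ satisfies $\psi$; $\models\varphi$ means $\varphi$ holds in every state; $\varphi\Rightarrow\psi$ is the usual implication of predicates. Expectations: $\mathbb{E}$ is the set of maps $\mathsf{States}\to[0,\infty]$, ordered pointwise; $+,\cdot$ pointwise with $0\cdot\infty=0$; $\sqcap,\sqcup$ pointwise min/max; $[\varphi]$ Iverson bracket; $(\varphi\to g)(\sigma)=g(\sigma)$ if $\sigma\models\varphi$, else $\infty$; $f[x/E](\sigma)=f(\sigma[x\mapsto E(\sigma)])$. Programs of $\mathsf{pGCL}$: $C ::= \mathtt{skip} \mid x:=E \mid C;C \mid \mathtt{if}\ \varphi_1\to C\ \square\ \varphi_2\to C \mid \{C\}[p]\{C\} \mid \mathtt{while}(\varphi)\{C\}[I]$, where $E:\mathsf{States}\to\mathbb{Q}_{\ge0}$, $p:\mathsf{States}\to[0,1]$, in every guarded choice $\varphi_1\vee\varphi_2$ is valid, and every loop carries an invariant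 annotation $I\in\mathbb{E}$. Weakest preexpectations for $\mathcal{T}\in\{\mathrm{dwp},\mathrm{awp}\}$: $\mathcal{T}[\![\mathtt{skip}]\!](f)=f$; $\mathcal{T}[\![x:=E]\!](f)=f[x/E]$; $\mathcal{T}[\![C_1;C_2]\!](f)=\mathcal{T}[\![C_1]\!](\mathcal{T}[\![C_2]\!](f))$; $\mathrm{dwp}$ of a guarded choice is $(\varphi_1\to\mathrm{dwp}[\![C_1]\!](f))\sqcap(\varphi_2\to\mathrm{dwp}[\![C_2]\!](f))$; $\mathrm{awp}$ of a guarded choice is $[\varphi_1]\cdot\mathrm{awp}[\![C_1]\!](f)\sqcup[\varphi_2]\cdot\mathrm{awp}[\![C_2]\!](f)$; $\mathcal{T}[\![\{C_1\}[p]\{C_2\}]\!](f)=p\cdot\mathcal{T}[\![C_1]\!](f)+(1-p)\cdot\mathcal{T}[\![C_2]\!](f)$; for loops the least fixpoint of $g\mapsto[\neg\varphi]\cdot f+[\varphi]\cdot\mathcal{T}[\![C']\!](g)$. The auxiliary transformer $\mathcal{T}^*$ ($\mathrm{dwp}^*$, $\mathrm{awp}^*$) is defined by the same rules except that $\mathcal{T}^*[\![\mathtt{while}(\varphi)\{C'\}[I]]\!](f)=I$. Implementation relation $\multimap$: the smallest partial order on $\mathsf{pGCL}$ closed under: if $C_1'\multimap C_1$, $C_2'\multimap C_2$ then $C_1';C_2'\multimap C_1;C_2$ and $\{C_1'\}[p]\{C_2'\}\multimap\{C_1\}[p]\{C_2\}$; if moreover $\varphi_1'\models\varphi_1$, $\varphi_2'\models\varphi_2$,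 $\models\varphi_1'\vee\varphi_2'$ then $\mathtt{if}\ \varphi_1'\to C_1'\ \square\ \varphi_2'\to C_2'\multimap\mathtt{if}\ \varphi_1\to C_1\ \square\ \varphi_2\to C_2$; if $C'\multimap C$ then $\mathtt{while}(\varphi)\{C'\}\multimap\mathtt{while}(\varphi)\{C\}$. Comparison predicates: for $f,g\in\mathbb{E}$, $f\preceq g$ is the predicate true at $\sigma$ iff $f(\sigma)\le g(\sigma)$, and $f\succeq g$ is true at $\sigma$ iff $f(\sigma)\ge g(\sigma)$. Program transformer $\mathrm{trans}^{\bowtie}_{\mathcal{T}}:\mathsf{pGCL}\times\mathbb{E}\to\mathsf{pGCL}$, by induction: $\mathtt{skip}\mapsto\mathtt{skip}$; $x:=E\mapsto x:=E$; $C_1;C_2\mapsto \mathrm{trans}^{\bowtie}_{\mathcal{T}}[\![C_1]\!](\mathcal{T}^*[\![C_2]\!](f));\mathrm{trans}^{\bowtie}_{\mathcal{T}}[\![C_2]\!](f)$; $\mathtt{if}\ \varphi_1\to C_1\ \square\ \varphi_2\to C_2\mapsto \mathtt{if}\ \psi_1\to\mathrm{trans}^{\bowtie}_{\mathcal{T}}[\![C_1]\!](f)\ \square\ \psi_2\to\mathrm{trans}^{\bowtie}_{\mathcal{T}}[\![C_2]\!](f)$ with $\psi_1=\varphi_1\wedge(\varphi_2\Rightarrow \mathcal{T}^*[\![C_1]\!](f)\bowtie\mathcal{T}^*[\![C_2]\!](f))$ and $\psi_2=\varphi_2\wedge(\varphi_1\Rightarrow \mathcal{T}^*[\![C_2]\!](f)\bowtie\mathcal{T}^*[\![C_1]\!](f))$;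 $\{C_1\}[p]\{C_2\}\mapsto\{\mathrm{trans}^{\bowtie}_{\mathcal{T}}[\![C_1]\!](f)\}[p]\{\mathrm{trans}^{\bowtie}_{\mathcal{T}}[\![C_2]\!](f)\}$; $\mathtt{while}(\varphi)\{C'\}[I]\mapsto\mathtt{while}(\varphi)\{\mathrm{trans}^{\bowtie}_{\mathcal{T}}[\![C']\!](I)\}[I]$. *)

theory Defs
  imports Main "HOL-Library.Extended_Nonnegative_Real"
begin

typedef qnn = "{q :: rat. 0 \<le> q}"
  by (rule exI[of _ 0]) simp

instantiation qnn :: zero
begin
definition zero_qnn :: qnn where "zero_qnn = Abs_qnn 0"
instance ..
end

type_synonym var = nat

typedef state = "{\<sigma> :: var \<Rightarrow> qnn. finite {x. \<sigma> x \<noteq> 0}}"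
  by (rule exI[of _ "\<lambda>_. 0"]) simp

definition upd :: "state \<Rightarrow> var \<Rightarrow> qnn \<Rightarrow> state" where
  "upd \<sigma> x v = Abs_state ((Rep_state \<sigma>)(x := v))"

type_synonym pred = "state \<Rightarrow> bool"
type_synonym expect = "state \<Rightarrow> ennreal"

definition valid :: "pred \<Rightarrow> bool" where
  "valid \<phi> \<longleftrightarrow> (\<forall>\<sigma>. \<phi> \<sigma>)"

definition entails :: "pred \<Rightarrow> pred \<Rightarrow> bool" where
  "entails \<phi> \<psi> \<longleftrightarrow> (\<forall>\<sigma>. \<phi> \<sigma> \<longrightarrow> \<psi> \<sigma>)"

definition iverson :: "pred \<Rightarrow> expect" where
  "iverson \<phi> = (\<lambda>\<sigma>. if \<phi> \<sigma> then 1 else 0)"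

definition guard_to :: "pred \<Rightarrow> expect \<Rightarrow> expect" where
  "guard_to \<phi> g = (\<lambda>\<sigma>. if \<phi> \<sigma> then g \<sigma> else \<infinity>)"

definition subst :: "expect \<Rightarrow> var \<Rightarrow> (state \<Rightarrow> qnn) \<Rightarrow> expect" where
  "subst f x E = (\<lambda>\<sigma>. f (upd \<sigma> x (E \<sigma>)))"

datatype pgcl =
    Skip
  | Assign var "state \<Rightarrow> qnn"
  | Seq pgcl pgcl
  | GChoice pred pgcl pred pgcl
  | PChoice pgcl "state \<Rightarrow> real" pgcl
  | While pred pgcl expect

fun wf_pgcl :: "pgcl \<Rightarrow> bool" where
  "wf_pgcl Skip = True"
| "wf_pgcl (Assign x E) = True"
| "wf_pgcl (Seq C1 C2) = (wf_pgcl C1 \<and> wf_pgcl C2)"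
| "wf_pgcl (GChoice \<phi>1 C1 \<phi>2 C2) =
     (valid (\<lambda>\<sigma>. \<phi>1 \<sigma> \<or> \<phi>2 \<sigma>) \<and> wf_pgcl C1 \<and> wf_pgcl C2)"
| "wf_pgcl (PChoice C1 p C2) =
     ((\<forall>\<sigma>. 0 \<le> p \<sigma> \<and> p \<sigma> \<le> 1) \<and> wf_pgcl C1 \<and> wf_pgcl C2)"
| "wf_pgcl (While \<phi> C I) = wf_pgcl C"

datatype transformer = Dwp | Awp

fun tstar :: "transformer \<Rightarrow> pgcl \<Rightarrow> expect \<Rightarrow> expect" where
  "tstar T Skip f = f"
| "tstar T (Assign x E) f = subst f x E"
| "tstar T (Seq C1 C2) f = tstar T C1 (tstar T C2 f)"
| "tstar Dwp (GChoice \<phi>1 C1 \<phi>2 C2) f =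
     (\<lambda>\<sigma>. min (guard_to \<phi>1 (tstar Dwp C1 f) \<sigma>) (guard_to \<phi>2 (tstar Dwp C2 f) \<sigma>))"
| "tstar Awp (GChoice \<phi>1 C1 \<phi>2 C2) f =
     (\<lambda>\<sigma>. max (iverson \<phi>1 \<sigma> * tstar Awp C1 f \<sigma>) (iverson \<phi>2 \<sigma> * tstar Awp C2 f \<sigma>))"
| "tstar T (PChoice C1 p C2) f =
     (\<lambda>\<sigma>. ennreal (p \<sigma>) * tstar T C1 f \<sigma> + ennreal (1 - p \<sigma>) * tstar T C2 f \<sigma>)"
| "tstar T (While \<phi> C I) f = I"

datatype cmp = Preceq | Succeq

fun cmp_pred :: "cmp \<Rightarrow> expect \<Rightarrow> expect \<Rightarrow> pred" where
  "cmp_pred Preceq f g = (\<lambda>\<sigma>. f \<sigma> \<le> g \<sigma>)"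
| "cmp_pred Succeq f g = (\<lambda>\<sigma>. f \<sigma> \<ge> g \<sigma>)"

fun transp_pgcl :: "cmp \<Rightarrow> transformer \<Rightarrow> pgcl \<Rightarrow> expect \<Rightarrow> pgcl" where
  "transp_pgcl B T Skip f = Skip"
| "transp_pgcl B T (Assign x E) f = Assign x E"
| "transp_pgcl B T (Seq C1 C2) f = Seq (transp_pgcl B T C1 (tstar T C2 f)) (transp_pgcl B T C2 f)"
| "transp_pgcl B T (GChoice \<phi>1 C1 \<phi>2 C2) f =
     GChoice (\<lambda>\<sigma>. \<phi>1 \<sigma> \<and> (\<phi>2 \<sigma> \<longrightarrow> cmp_pred B (tstar T C1 f) (tstar T C2 f) \<sigma>))
             (transp_pgcl B T C1 f)
             (\<lambda>\<sigma>. \<phi>2 \<sigma> \<and> (\<phi>1 \<sigma> \<longrightarrow> cmp_pred B (tstar T C2 f) (tstar T C1 f) \<sigma>))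
             (transp_pgcl B T C2 f)"
| "transp_pgcl B T (PChoice C1 p C2) f = PChoice (transp_pgcl B T C1 f) p (transp_pgcl B T C2 f)"
| "transp_pgcl B T (While \<phi> C I) f = While \<phi> (transp_pgcl B T C I) I"

text \<open>impl C' C means C' \<multimap> C: the smallest reflexive (on pGCL) and transitive relation
  closed under the congruence rules.\<close>
inductive impl :: "pgcl \<Rightarrow> pgcl \<Rightarrow> bool" where
  impl_refl: "wf_pgcl C \<Longrightarrow> impl C C"
| impl_trans: "impl C1 C2 \<Longrightarrow> impl C2 C3 \<Longrightarrow> impl C1 C3"
| impl_seq: "impl C1' C1 \<Longrightarrow> impl C2' C2 \<Longrightarrow> impl (Seq C1' C2') (Seq C1 C2)"
| impl_pchoice: "impl C1' C1 \<Longrightarrow> impl C2' C2 \<Longrightarrow> impl (PChoice C1' p C2') (PChoice C1 p C2)"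
| impl_gchoice: "impl C1' C1 \<Longrightarrow> impl C2' C2 \<Longrightarrow> entails \<phi>1' \<phi>1 \<Longrightarrow> entails \<phi>2' \<phi>2 \<Longrightarrow>
     valid (\<lambda>\<sigma>. \<phi>1' \<sigma> \<or> \<phi>2' \<sigma>) \<Longrightarrow>
     impl (GChoice \<phi>1' C1' \<phi>2' C2') (GChoice \<phi>1 C1 \<phi>2 C2)"
| impl_while: "impl C' C \<Longrightarrow> impl (While \<phi> C' I) (While \<phi> C I)"

end

theory Submission
  imports Defs
begin

lemma cmp_total: "cmp_pred B f g s \<or> cmp_pred B g f s"
  by (cases B) auto

theorem theorem6p2:
  fixes B :: cmp and T :: transformer and C :: pgcl and f :: expect
  assumes "wf_pgcl C"
  shows "impl (transp_pgcl B T C f) C"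
  using assms
proof (induction C arbitrary: f)
  case Skip
  then show ?case by (auto intro: impl_refl)
next
  case (Assign x E)
  then show ?case by (auto intro: impl_refl)
next
  case (Seq C1 C2)
  then show ?case by (auto intro: impl_seq)
next
  case (GChoice p1 C1 p2 C2)
  show ?case
    apply simp
    apply (rule impl_gchoice)
    using GChoice apply auto[2]
      apply (simp add: entails_def)
     apply (simp add: entails_def)
    using GChoice.prems cmp_total[of B "tstar T C1 f" "tstar T C2 f"]
    by (auto simp: valid_def)
next
  case (PChoice C1 p C2)
  then show ?case by (auto intro: impl_pchoice)
next
  case (While p C I)
  then show ?case by (auto intro: impl_while)
qed

end
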